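(* Let $g\in\mathbb Y$ and let $\hat x_\alpha\in R_\alpha(g)$, $\alpha>0$, be any selection. Define $\vartheta_g:(0,\infty)\to\mathbb R$ by $\vartheta_g(\alpha):=\inf_{x\in\mathrm{dom}(\mathcal R)}T_\alpha(x,g)=\frac1{2\alpha}\|g-A\hat x_\alpha\|^2_{\mathbb Y}+\mathcal R(\hat x_\alpha)$. Then $\vartheta_g$ is convex, non-increasing and continuously differentiable with $$\vartheta_g'(\alpha)=-\frac1{2\alpha^2}\|g-A\hat x_\alpha\|_{\mathbb Y}^2\quad\text{for all }\alpha>0.$$
   Context: Standing setting: $\mathbb X$ real Banach space, $\tau$ a topology with $(\mathbb X,\tau)$ locally convex Hausdorff; $\mathcal R:\mathbb X\to(-\infty,\infty]$ proper convex with $\tau$-compact sublevel sets $\{\mathcal R\le\lambda\}$; $\mathbb Y$ real Hilbert space; $A:\mathbb X\to\mathbb Y$ linear, $\tau$-to-weak continuous. $T_\alpha(x,g):=\frac1{2\alpha}\|g-Ax\|_{\mathbb Y}^2+\mathcal R(x)$, $R_\alpha(g):=\operatorname{argmin}_{x\in\mathrm{dom}(\mathcal R)}T_\alpha(x,g)$ (nonempty). *)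

theory Defs
  imports "HOL-Analysis.Analysis"
begin

definition tvs_topology :: "'a::real_vector topology \<Rightarrow> bool" where
  "tvs_topology \<tau> \<longleftrightarrow> topspace \<tau> = UNIV
     \<and> continuous_map (prod_topology \<tau> \<tau>) \<tau> (\<lambda>(x, y). x + y)
     \<and> continuous_map (prod_topology euclideanreal \<tau>) \<tau> (\<lambda>(c, x). c *\<^sub>R x)"

definition locally_convex_hausdorff :: "'a::real_vector topology \<Rightarrow> bool" where
  "locally_convex_hausdorff \<tau> \<longleftrightarrow> tvs_topology \<tau> \<and> Hausdorff_space \<tau>
     \<and> (\<forall>x U. openin \<tau> U \<and> x \<in> U \<longrightarrow> (\<exists>V. openin \<tau> V \<and> convex V \<and> x \<in> V \<and> V \<subseteq> U))"

definition weak_topology :: "'b::real_inner topology" where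
  "weak_topology = topology_generated_by {{y. y \<bullet> z \<in> U} | z U. open U}"

definition edom :: "('a \<Rightarrow> ereal) \<Rightarrow> 'a set" where
  "edom R = {x. R x < \<infinity>}"

definition proper_fun :: "('a \<Rightarrow> ereal) \<Rightarrow> bool" where
  "proper_fun R \<longleftrightarrow> (\<exists>x. R x < \<infinity>) \<and> (\<forall>x. R x > -\<infinity>)"

definition convex_fun :: "('a::real_vector \<Rightarrow> ereal) \<Rightarrow> bool" where
  "convex_fun R \<longleftrightarrow> (\<forall>x y t. 0 \<le> t \<and> t \<le> 1 \<longrightarrow>
      R ((1 - t) *\<^sub>R x + t *\<^sub>R y) \<le> ereal (1 - t) * R x + ereal t * R y)"

definition Tik :: "('a \<Rightarrow> 'b::real_normed_vector) \<Rightarrow> ('a \<Rightarrow> ereal) \<Rightarrow> real \<Rightarrow> 'a \<Rightarrow> 'b \<Rightarrow> ereal" where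
  "Tik A R \<alpha> x g = ereal (norm (g - A x) ^ 2 / (2 * \<alpha>)) + R x"

definition Rmin :: "('a \<Rightarrow> 'b::real_normed_vector) \<Rightarrow> ('a \<Rightarrow> ereal) \<Rightarrow> real \<Rightarrow> 'b \<Rightarrow> 'a set" where
  "Rmin A R \<alpha> g = {x \<in> edom R. \<forall>y \<in> edom R. Tik A R \<alpha> x g \<le> Tik A R \<alpha> y g}"

definition vartheta :: "('a \<Rightarrow> 'b::real_normed_vector) \<Rightarrow> ('a \<Rightarrow> ereal) \<Rightarrow> 'b \<Rightarrow> real \<Rightarrow> real" where
  "vartheta A R g \<alpha> = real_of_ereal (INF x \<in> edom R. Tik A R \<alpha> x g)"

end

theory Submission
  imports Defs
begin


lemma slope_bounds:
  fixes \<theta> n :: "real \<Rightarrow> real"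
  assumes H1: "\<And>a b. a > 0 \<Longrightarrow> b > 0 \<Longrightarrow> \<theta> b \<le> \<theta> a + n a * (1/b - 1/a)"
    and cvx: "convex_on {0<..} \<theta>"
    and a: "a > 0"
  shows "\<And>b. b > a \<Longrightarrow> - n a / a^2 \<le> (\<theta> b - \<theta> a) / (b - a)"
    and "\<And>b. 0 < b \<Longrightarrow> b < a \<Longrightarrow> (\<theta> b - \<theta> a) / (b - a) \<le> - n a / a^2"
    and "\<And>b. 0 < b \<Longrightarrow> b \<noteq> a \<Longrightarrow> (\<theta> b - \<theta> a) / (b - a) \<le> - n a / (a * b) \<and> b > a
         \<or> (\<theta> b - \<theta> a) / (b - a) \<ge> - n a / (a * b) \<and> b < a"
proof -
  define D where "D b = (\<theta> b - \<theta> a) / (b - a)" for b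
  define q where "q b = - n a / (a * b)" for b
  have Dq1: "D b \<le> q b" if "b > a" for b
  proof -
    have "\<theta> b - \<theta> a \<le> n a * (1/b - 1/a)" using H1[OF a, of b] that a by simp
    also have "n a * (1/b - 1/a) = q b * (b - a)" using a that by (simp add: q_def field_simps)
    finally show ?thesis using that unfolding D_def by (simp add: divide_le_eq)
  qed
  have Dq2: "D b \<ge> q b" if "b < a" "b > 0" for b
  proof -
    have "\<theta> b - \<theta> a \<le> n a * (1/b - 1/a)" using H1[OF a, of b] that a by simp
    also have "n a * (1/b - 1/a) = q b * (b - a)" using a that by (simp add: q_def field_simps)
    finally show ?thesis using that unfolding D_def by (simp add: le_divide_eq)
  qed
  have sl: "D c \<le> D b" if "0 < c" "c < a" "a < b" for b c
  proof -
    have "c \<in> {0<..}" "b \<in> {0<..}" using that by auto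
    note h = convex_on_slope_le[OF cvx this, of a]
    have "(\<theta> a - \<theta> b) / (a - b) = D b" unfolding D_def
      by (metis minus_diff_eq minus_divide_divide)
    then show ?thesis using h that unfolding D_def by linarith
  qed
  have qlim: "(q \<longlongrightarrow> - n a / a^2) (at a within S)" for S
  proof -
    have "((\<lambda>b. - n a / (a * b)) \<longlongrightarrow> - n a / (a * a)) (at a within S)"
      using a by (intro tendsto_intros) auto
    then show ?thesis by (simp add: q_def[abs_def] power2_eq_square)
  qed
  show r1: "- n a / a^2 \<le> D b" if "b > a" for b
  proof (rule tendsto_upperbound[OF qlim[of "{..<a}"]])
    show "\<forall>\<^sub>F x in at_left a. q x \<le> D b"
      using eventually_at_left_real[OF a]
    proof eventually_elim
      case (elim x) then show ?case using Dq2[of x] sl[of x b] that by auto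
    qed
  qed (simp add: trivial_limit_at_left_real)
  show r2: "D b \<le> - n a / a^2" if "0 < b" "b < a" for b
  proof (rule tendsto_lowerbound[OF qlim[of "{a<..}"]])
    show "\<forall>\<^sub>F x in at_right a. D b \<le> q x"
      using eventually_at_right_real[of a "a+1", OF less_add_one]
    proof eventually_elim
      case (elim x) then show ?case using Dq1[of x] sl[of b x] that by auto
    qed
  qed (simp add: trivial_limit_at_right_real)
  show "\<And>b. 0 < b \<Longrightarrow> b \<noteq> a \<Longrightarrow> D b \<le> q b \<and> b > a \<or> D b \<ge> q b \<and> b < a"
    using Dq1 Dq2 by (metis linorder_neqE_linordered_idom)
qed

lemma deriv_part:
  fixes \<theta> n :: "real \<Rightarrow> real"
  assumes H1: "\<And>a b. a > 0 \<Longrightarrow> b > 0 \<Longrightarrow> \<theta> b \<le> \<theta> a + n a * (1/b - 1/a)"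
    and cvx: "convex_on {0<..} \<theta>"
    and a: "a > 0"
  shows "(\<theta> has_real_derivative (- n a / a^2)) (at a)"
proof -
  note sb = slope_bounds[OF H1 cvx a]
  define d where "d = - n a / a^2"
  define D where "D b = (\<theta> b - \<theta> a) / (b - a)" for b
  define q where "q b = - n a / (a * b)" for b
  have qlim: "(q \<longlongrightarrow> d) (at a)"
  proof -
    have "((\<lambda>b. - n a / (a * b)) \<longlongrightarrow> - n a / (a * a)) (at a)"
      using a by (intro tendsto_intros) auto
    then show ?thesis by (simp add: q_def[abs_def] d_def power2_eq_square)
  qed
  have ev: "eventually (\<lambda>b. b > 0 \<and> b \<noteq> a) (at a)"
    using order_tendstoD(1)[OF tendsto_ident_at a] eventually_neq_at_within[of a a UNIV]
    by eventually_elim auto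
  have "(D \<longlongrightarrow> d) (at a)"
  proof (rule tendsto_sandwich[where f="\<lambda>b. min d (q b)" and h="\<lambda>b. max d (q b)"])
    show "\<forall>\<^sub>F b in at a. min d (q b) \<le> D b" using ev
    proof eventually_elim
      case (elim b) then show ?case using sb[of b] unfolding D_def q_def d_def
        by (cases "b < a") (auto simp: min_le_iff_disj)
    qed
    show "\<forall>\<^sub>F b in at a. D b \<le> max d (q b)" using ev
    proof eventually_elim
      case (elim b) then show ?case using sb[of b] unfolding D_def q_def d_def
        by (cases "b < a") (auto simp: le_max_iff_disj)
    qed
    show "((\<lambda>b. min d (q b)) \<longlongrightarrow> d) (at a)"
      using tendsto_min[OF tendsto_const qlim, of d] by simp
    show "((\<lambda>b. max d (q b)) \<longlongrightarrow> d) (at a)"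
      using tendsto_max[OF tendsto_const qlim, of d] by simp
  qed
  then show ?thesis unfolding has_field_derivative_iff D_def d_def .
qed

lemma deriv_mono:
  fixes \<theta> n :: "real \<Rightarrow> real"
  assumes H1: "\<And>a b. a > 0 \<Longrightarrow> b > 0 \<Longrightarrow> \<theta> b \<le> \<theta> a + n a * (1/b - 1/a)"
    and cvx: "convex_on {0<..} \<theta>"
    and ab: "0 < a" "a < b"
  shows "- n a / a^2 \<le> - n b / b^2"
proof -
  have "- n a / a^2 \<le> (\<theta> b - \<theta> a) / (b - a)" using slope_bounds(1)[OF H1 cvx, of a b] ab by auto
  also have "(\<theta> b - \<theta> a) / (b - a) = (\<theta> a - \<theta> b) / (a - b)"
    by (metis minus_diff_eq minus_divide_divide)
  also have "\<dots> \<le> - n b / b^2" using slope_bounds(2)[OF H1 cvx, of b a] ab by auto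
  finally show ?thesis .
qed

lemma cont_part:
  fixes \<theta> n :: "real \<Rightarrow> real"
  assumes H1: "\<And>a b. a > 0 \<Longrightarrow> b > 0 \<Longrightarrow> \<theta> b \<le> \<theta> a + n a * (1/b - 1/a)"
    and cvx: "convex_on {0<..} \<theta>"
  shows "continuous_on {0<..} (\<lambda>a. - n a / a^2)"
proof -
  define d where "d a = - n a / a^2" for a
  have der: "(\<theta> has_real_derivative d x) (at x)" if "x > 0" for x
    using deriv_part[OF H1 cvx that] unfolding d_def .
  have mono: "d x \<le> d y" if "0 < x" "x \<le> y" for x y
    using deriv_mono[OF H1 cvx, of x y] that unfolding d_def
    by (cases "x = y") auto
  have "isCont d a" if a: "a > 0" for a
  proof -
    have R: "(d \<longlongrightarrow> d a) (at_right a)"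
    proof (rule order_tendstoI)
      fix c assume c: "c < d a"
      show "\<forall>\<^sub>F b in at_right a. c < d b"
        using eventually_at_right_real[of a "a+1", OF less_add_one]
      proof eventually_elim
        case (elim b) then show ?case using mono[of a b] a c by auto
      qed
    next
      fix c assume c: "d a < c"
      have "((\<lambda>b. (\<theta> b - \<theta> a) / (b - a)) \<longlongrightarrow> d a) (at_right a)"
        using has_field_derivative_at_within[OF der[OF a], of "{a<..}"]
        unfolding has_field_derivative_iff .
      then have "\<forall>\<^sub>F b in at_right a. (\<theta> b - \<theta> a) / (b - a) < c"
        using c by (rule order_tendstoD)
      then have "\<forall>\<^sub>F b in at_right a. (\<theta> b - \<theta> a) / (b - a) < c \<and> b \<in> {a<..<a+1}"
        using eventually_at_right_real[of a "a+1", OF less_add_one] by eventually_elim auto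
      then obtain b0 where b0: "(\<theta> b0 - \<theta> a) / (b0 - a) < c" "a < b0"
        using eventually_happens'[OF trivial_limit_at_right_real] by fastforce
      obtain z where z: "a < z" "z < b0" "\<theta> b0 - \<theta> a = (b0 - a) * d z"
        using MVT2[OF b0(2), of \<theta> d] der a by fastforce
      have "d z < c" using z b0 by simp
      show "\<forall>\<^sub>F b in at_right a. d b < c"
        using eventually_at_right_real[OF z(1)]
      proof eventually_elim
        case (elim b) then show ?case using mono[of b z] a \<open>d z < c\<close> by auto
      qed
    qed
    have L: "(d \<longlongrightarrow> d a) (at_left a)"
    proof (rule order_tendstoI)
      fix c assume c: "d a < c"
      show "\<forall>\<^sub>F b in at_left a. d b < c"
        using eventually_at_left_real[OF a]
      proof eventually_elim
        case (elim b) then show ?case using mono[of b a] a c by auto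
      qed
    next
      fix c assume c: "c < d a"
      have "((\<lambda>b. (\<theta> b - \<theta> a) / (b - a)) \<longlongrightarrow> d a) (at_left a)"
        using has_field_derivative_at_within[OF der[OF a], of "{..<a}"]
        unfolding has_field_derivative_iff .
      then have "\<forall>\<^sub>F b in at_left a. c < (\<theta> b - \<theta> a) / (b - a)"
        using c by (rule order_tendstoD)
      then have "\<forall>\<^sub>F b in at_left a. c < (\<theta> b - \<theta> a) / (b - a) \<and> b \<in> {0<..<a}"
        using eventually_at_left_real[OF a] by eventually_elim auto
      then obtain b0 where b0: "c < (\<theta> b0 - \<theta> a) / (b0 - a)" "b0 < a" "0 < b0"
        using eventually_happens'[OF trivial_limit_at_left_real] by fastforce
      obtain z where z: "b0 < z" "z < a" "\<theta> a - \<theta> b0 = (a - b0) * d z"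
        using MVT2[OF b0(2), of \<theta> d] der b0 by fastforce
      have "(\<theta> b0 - \<theta> a) / (b0 - a) = (\<theta> a - \<theta> b0) / (a - b0)"
        by (metis minus_diff_eq minus_divide_divide)
      then have "c < d z" using z b0 by simp
      show "\<forall>\<^sub>F b in at_left a. c < d b"
        using eventually_at_left_real[OF z(2)]
      proof eventually_elim
        case (elim b) then show ?case using mono[of z b] z b0 \<open>c < d z\<close> by auto
      qed
    qed
    show ?thesis unfolding isCont_def using filterlim_split_at_real[OF L R] .
  qed
  then show ?thesis unfolding d_def[abs_def]
    by (subst continuous_on_eq_continuous_at) auto
qed



lemma cs_ineq:
  fixes a b P Q :: real
  assumes "a \<ge> 0" "b \<ge> 0"
  shows "(a*P + b*Q)^2 \<le> (a + b) * (a*P^2 + b*Q^2)"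
proof -
  have "(a + b) * (a*P^2 + b*Q^2) - (a*P + b*Q)^2 = a*b*(P-Q)^2"
    by (simp add: power2_eq_square algebra_simps)
  moreover have "a*b*(P-Q)^2 \<ge> 0" using assms by simp
  ultimately show ?thesis by linarith
qed

lemma persp:
  fixes u v :: "'b::real_normed_vector"
  assumes x: "x > 0" and y: "y > 0" and t: "0 \<le> t" "t \<le> 1"
  shows "norm ((1-t) *\<^sub>R u + t *\<^sub>R v)^2 / (2*((1-t)*x + t*y))
         \<le> (1-t) * (norm u^2 / (2*x)) + t * (norm v^2 / (2*y))"
proof -
  define a where "a = (1-t)*x"
  define b where "b = t*y"
  define P where "P = norm u / x"
  define Q where "Q = norm v / y"
  have a0: "a \<ge> 0" and b0: "b \<ge> 0" using x y t by (auto simp: a_def b_def)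
  have ab: "a + b > 0"
  proof (cases "t = 0")
    case True then show ?thesis using x by (simp add: a_def b_def)
  next
    case False then show ?thesis using x y t by (simp add: a_def b_def add_nonneg_pos)
  qed
  have "norm ((1-t) *\<^sub>R u + t *\<^sub>R v) \<le> (1-t) * norm u + t * norm v"
    using norm_triangle_ineq[of "(1-t) *\<^sub>R u" "t *\<^sub>R v"] t by simp
  also have "(1-t) * norm u + t * norm v = a*P + b*Q"
    using x y by (simp add: a_def b_def P_def Q_def)
  finally have "norm ((1-t) *\<^sub>R u + t *\<^sub>R v)^2 \<le> (a*P + b*Q)^2"
    by (rule power_mono) simp
  also have "\<dots> \<le> (a + b) * (a*P^2 + b*Q^2)" by (rule cs_ineq[OF a0 b0])
  finally have "norm ((1-t) *\<^sub>R u + t *\<^sub>R v)^2 / (2*(a+b)) \<le> (a + b) * (a*P^2 + b*Q^2) / (2*(a+b))"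
    using ab by (intro divide_right_mono) auto
  also have "\<dots> = (a*P^2 + b*Q^2) / 2" using ab by (simp add: field_simps)
  also have "(a*P^2 + b*Q^2) / 2 = (1-t) * (norm u^2 / (2*x)) + t * (norm v^2 / (2*y))"
    using x y by (simp add: a_def b_def P_def Q_def power2_eq_square field_simps)
  finally show ?thesis by (simp add: a_def b_def)
qed

theorem proposition5p3:
  fixes \<tau> :: "'a::banach topology"
    and R :: "'a \<Rightarrow> ereal"
    and A :: "'a \<Rightarrow> 'b::{real_inner, complete_space}"
    and g :: 'b
    and xh :: "real \<Rightarrow> 'a"
  assumes "locally_convex_hausdorff \<tau>"
    and "proper_fun R" and "convex_fun R"
    and "\<And>c::real. compactin \<tau> {x. R x \<le> ereal c}"
    and "linear A" and "continuous_map \<tau> weak_topology A"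
    and "\<And>\<alpha>. \<alpha> > 0 \<Longrightarrow> Rmin A R \<alpha> g \<noteq> {}"
    and "\<And>\<alpha>. \<alpha> > 0 \<Longrightarrow> xh \<alpha> \<in> Rmin A R \<alpha> g"
  shows "(\<forall>\<alpha>>0. ereal (vartheta A R g \<alpha>) = Tik A R \<alpha> (xh \<alpha>) g)
    \<and> convex_on {0<..} (vartheta A R g)
    \<and> (\<forall>\<alpha> \<beta>. 0 < \<alpha> \<and> \<alpha> \<le> \<beta> \<longrightarrow> vartheta A R g \<beta> \<le> vartheta A R g \<alpha>)
    \<and> (\<forall>\<alpha>>0. (vartheta A R g has_real_derivative
          - (norm (g - A (xh \<alpha>)) ^ 2 / (2 * \<alpha> ^ 2))) (at \<alpha>))
    \<and> continuous_on {0<..} (\<lambda>\<alpha>. - (norm (g - A (xh \<alpha>)) ^ 2 / (2 * \<alpha> ^ 2)))"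
proof -
  note hprop = assms(2) and cvxR = assms(3) and lin = assms(5) and xhm = assms(8)
  define Rr where "Rr x = real_of_ereal (R x)" for x
  define N where "N x = norm (g - A x)^2" for x
  define \<theta> where "\<theta> = vartheta A R g"
  have fin: "R x = ereal (Rr x)" if "x \<in> edom R" for x
  proof -
    have "R x < \<infinity>" "R x > -\<infinity>" using that hprop by (auto simp: edom_def proper_fun_def)
    then show ?thesis unfolding Rr_def by (cases "R x") auto
  qed
  have Tik_eq: "Tik A R \<alpha> x g = ereal (N x / (2*\<alpha>) + Rr x)" if "x \<in> edom R" for x \<alpha>
    using fin[OF that] by (simp add: Tik_def N_def)
  have xin: "xh \<alpha> \<in> edom R" "\<And>y. y \<in> edom R \<Longrightarrow> Tik A R \<alpha> (xh \<alpha>) g \<le> Tik A R \<alpha> y g"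
    if "\<alpha> > 0" for \<alpha>
    using xhm[OF that] by (auto simp: Rmin_def)
  define V where "V \<alpha> = N (xh \<alpha>) / (2*\<alpha>) + Rr (xh \<alpha>)" for \<alpha>
  have INFeq: "(INF x \<in> edom R. Tik A R \<alpha> x g) = Tik A R \<alpha> (xh \<alpha>) g" if "\<alpha> > 0" for \<alpha>
  proof (rule antisym)
    show "(INF x \<in> edom R. Tik A R \<alpha> x g) \<le> Tik A R \<alpha> (xh \<alpha>) g"
      by (rule INF_lower) (rule xin(1)[OF that])
    show "Tik A R \<alpha> (xh \<alpha>) g \<le> (INF x \<in> edom R. Tik A R \<alpha> x g)"
      by (rule INF_greatest) (rule xin(2)[OF that])
  qed
  have thV: "\<theta> \<alpha> = V \<alpha>" if "\<alpha> > 0" for \<alpha>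
    using INFeq[OF that] Tik_eq[OF xin(1)[OF that]]
    by (simp add: \<theta>_def vartheta_def V_def)
  have P1: "\<forall>\<alpha>>0. ereal (vartheta A R g \<alpha>) = Tik A R \<alpha> (xh \<alpha>) g"
    using thV Tik_eq xin(1) by (simp add: \<theta>_def V_def)
  have minV: "\<theta> \<alpha> \<le> N y / (2*\<alpha>) + Rr y" if "\<alpha> > 0" "y \<in> edom R" for \<alpha> y
    using xin(2)[OF that] Tik_eq[OF that(2)] Tik_eq[OF xin(1)[OF that(1)]] thV[OF that(1)]
    by (simp add: V_def)
  define n where "n \<alpha> = N (xh \<alpha>) / 2" for \<alpha>
  have H1: "\<theta> b \<le> \<theta> a + n a * (1/b - 1/a)" if "a > 0" "b > 0" for a b
  proof -
    have "\<theta> b \<le> N (xh a) / (2*b) + Rr (xh a)" using minV[OF that(2) xin(1)[OF that(1)]] .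
    also have "\<dots> = \<theta> a + n a * (1/b - 1/a)"
      unfolding thV[OF that(1)] V_def n_def using that by (simp add: field_simps)
    finally show ?thesis .
  qed
  have Nnn: "N x \<ge> 0" for x by (simp add: N_def)
  have P3: "\<forall>\<alpha> \<beta>. 0 < \<alpha> \<and> \<alpha> \<le> \<beta> \<longrightarrow> \<theta> \<beta> \<le> \<theta> \<alpha>"
  proof (intro allI impI)
    fix a b :: real assume ab: "0 < a \<and> a \<le> b"
    have "1/b \<le> 1/a" using ab by (simp add: frac_le)
    moreover have "n a \<ge> 0" using Nnn by (simp add: n_def)
    ultimately have "n a * (1/b - 1/a) \<le> 0" by (simp add: mult_nonneg_nonpos)
    then show "\<theta> b \<le> \<theta> a" using H1[of a b] ab by linarith
  qed
  have P2: "convex_on {0<..} \<theta>"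
  proof (rule convex_onI)
    show "convex ({0<..} :: real set)" by (rule convex_real_interval)
    fix t x y :: real assume t: "0 < t" "t < 1" and xy: "x \<in> {0<..}" "y \<in> {0<..}"
    have x: "x > 0" and y: "y > 0" using xy by auto
    define xa where "xa = xh x"
    define xb where "xb = xh y"
    define z where "z = (1-t) *\<^sub>R xa + t *\<^sub>R xb"
    define \<gamma> where "\<gamma> = (1-t)*x + t*y"
    have \<gamma>: "\<gamma> > 0" using t x y by (simp add: \<gamma>_def add_pos_pos)
    have ina: "xa \<in> edom R" and inb: "xb \<in> edom R" using xin(1) x y by (auto simp: xa_def xb_def)
    have "R z \<le> ereal (1-t) * R xa + ereal t * R xb"
    proof -
      have "0 \<le> t" "t \<le> 1" using t by auto
      then show ?thesis using cvxR unfolding convex_fun_def z_def by blast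
    qed
    also have "\<dots> = ereal ((1-t) * Rr xa + t * Rr xb)"
      using fin[OF ina] fin[OF inb] by simp
    finally have Rz: "R z \<le> ereal ((1-t) * Rr xa + t * Rr xb)" .
    have "R z < \<infinity>" using Rz by (rule le_less_trans) simp
    then have inz: "z \<in> edom R" by (simp add: edom_def)
    have Rrz: "Rr z \<le> (1-t) * Rr xa + t * Rr xb" using Rz fin[OF inz] by simp
    have Az: "g - A z = (1-t) *\<^sub>R (g - A xa) + t *\<^sub>R (g - A xb)"
    proof -
      have "A z = (1-t) *\<^sub>R A xa + t *\<^sub>R A xb"
        unfolding z_def using lin by (simp add: linear_add linear_cmul)
      then show ?thesis by (simp add: algebra_simps)
    qed
    have Nz: "N z / (2*\<gamma>) \<le> (1-t) * (N xa / (2*x)) + t * (N xb / (2*y))"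
      unfolding N_def Az \<gamma>_def using persp[OF x y, of t] t by simp
    have "\<theta> ((1-t) *\<^sub>R x + t *\<^sub>R y) = \<theta> \<gamma>" by (simp add: \<gamma>_def)
    also have "\<dots> \<le> N z / (2*\<gamma>) + Rr z" by (rule minV[OF \<gamma> inz])
    also have "\<dots> \<le> (1-t) * (N xa / (2*x)) + t * (N xb / (2*y)) + ((1-t) * Rr xa + t * Rr xb)"
      using Nz Rrz by linarith
    also have "\<dots> = (1-t) * \<theta> x + t * \<theta> y"
      using thV[OF x] thV[OF y] by (simp add: V_def xa_def xb_def algebra_simps)
    finally show "\<theta> ((1-t) *\<^sub>R x + t *\<^sub>R y) \<le> (1-t) * \<theta> x + t * \<theta> y" .
  qed
  have eqd: "- n \<alpha> / \<alpha>^2 = - (norm (g - A (xh \<alpha>)) ^ 2 / (2 * \<alpha> ^ 2))" for \<alpha>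
    by (simp add: n_def N_def)
  have P4: "\<forall>\<alpha>>0. (\<theta> has_real_derivative - (norm (g - A (xh \<alpha>)) ^ 2 / (2 * \<alpha> ^ 2))) (at \<alpha>)"
  proof (intro allI impI)
    fix \<alpha> :: real assume "\<alpha> > 0"
    show "(\<theta> has_real_derivative - (norm (g - A (xh \<alpha>)) ^ 2 / (2 * \<alpha> ^ 2))) (at \<alpha>)"
      using deriv_part[OF H1 P2 \<open>\<alpha> > 0\<close>] unfolding eqd .
  qed
  have P5: "continuous_on {0<..} (\<lambda>\<alpha>. - (norm (g - A (xh \<alpha>)) ^ 2 / (2 * \<alpha> ^ 2)))"
    using cont_part[OF H1 P2] unfolding eqd .
  show ?thesis using P1 P2 P3 P4 P5 unfolding \<theta>_def by (simp only:)
qed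

end
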